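(* Let $X,Y$ be measurable spaces and $\hat\nu$ a probability kernel. Then (1) the map $\pi\mapsto H^{\hat\nu}(\pi)$ on probabilities on $X\times Y$ is concave; (2) if $\pi_n,\pi$ are probabilities on $X\times Y$ such that $\int f\,d\pi_n\to\int f\,d\pi$ for every bounded measurable $f:X\times Y\to\mathbb{R}$, then $\limsup_n H^{\hat\nu}(\pi_n)\le H^{\hat\nu}(\pi)$.
   Context: A probability kernel is a family $\hat\nu=\{\hat\nu^y: y\in Y\}$ of probabilities on $X$ such that $y\mapsto\hat\nu^y(B)$ is measurable for each measurable $B\subset X$. $\mathcal{F}(\pi)$ is the set of measurable functions whose $\pi$-integral is well defined, and $H^{\hat\nu}(\pi)=-\sup\{\int c\,d\pi:\ c\in\mathcal{F}(\pi),\ \int e^{c(x,y)}\hat\nu^y(dx)=1\ \forall y\}$. *)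

theory Defs
  imports "HOL-Probability.Probability"
begin

definition prob_kernel :: "'b measure \<Rightarrow> 'a measure \<Rightarrow> ('b \<Rightarrow> 'a measure) \<Rightarrow> bool" where
  "prob_kernel Y X \<nu> \<longleftrightarrow>
     (\<forall>y\<in>space Y. prob_space (\<nu> y) \<and> sets (\<nu> y) = sets X) \<and>
     (\<forall>B\<in>sets X. (\<lambda>y. emeasure (\<nu> y) B) \<in> borel_measurable Y)"

definition prob_on :: "('a \<times> 'b) measure \<Rightarrow> 'a measure \<Rightarrow> 'b measure \<Rightarrow> bool" where
  "prob_on \<pi> X Y \<longleftrightarrow> prob_space \<pi> \<and> sets \<pi> = sets (X \<Otimes>\<^sub>M Y)"

definition int_pos :: "'a measure \<Rightarrow> ('a \<Rightarrow> real) \<Rightarrow> ennreal" where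
  "int_pos M c = (\<integral>\<^sup>+ x. ennreal (c x) \<partial>M)"

definition int_neg :: "'a measure \<Rightarrow> ('a \<Rightarrow> real) \<Rightarrow> ennreal" where
  "int_neg M c = (\<integral>\<^sup>+ x. ennreal (- c x) \<partial>M)"

definition integral_well_defined :: "'a measure \<Rightarrow> ('a \<Rightarrow> real) \<Rightarrow> bool" where
  "integral_well_defined M c \<longleftrightarrow>
     c \<in> borel_measurable M \<and> (int_pos M c \<noteq> \<infinity> \<or> int_neg M c \<noteq> \<infinity>)"

definition ext_integral :: "'a measure \<Rightarrow> ('a \<Rightarrow> real) \<Rightarrow> ereal" where
  "ext_integral M c = enn2ereal (int_pos M c) - enn2ereal (int_neg M c)"

definition H_kernel ::
  "'a measure \<Rightarrow> 'b measure \<Rightarrow> ('b \<Rightarrow> 'a measure) \<Rightarrow> ('a \<times> 'b) measure \<Rightarrow> ereal" where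
  "H_kernel X Y \<nu> \<pi> =
     - (SUP c \<in> {c. c \<in> borel_measurable (X \<Otimes>\<^sub>M Y) \<and> integral_well_defined \<pi> c \<and>
                   (\<forall>y\<in>space Y. (\<integral>\<^sup>+ x. ennreal (exp (c (x, y))) \<partial>(\<nu> y)) = 1)}.
          ext_integral \<pi> c)"

definition mix_measure ::
  "'a measure \<Rightarrow> 'b measure \<Rightarrow> real \<Rightarrow> ('a \<times> 'b) measure \<Rightarrow> ('a \<times> 'b) measure \<Rightarrow> ('a \<times> 'b) measure" where
  "mix_measure X Y t \<pi>1 \<pi>2 =
     measure_of (space (X \<Otimes>\<^sub>M Y)) (sets (X \<Otimes>\<^sub>M Y))
       (\<lambda>A. ennreal t * emeasure \<pi>1 A + ennreal (1 - t) * emeasure \<pi>2 A)"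

end

theory Submission
  imports Defs
begin


lemma mix_emeasure:
  assumes p1: "prob_on \<pi>1 X Y" and p2: "prob_on \<pi>2 X Y"
  shows "sets (mix_measure X Y t \<pi>1 \<pi>2) = sets (X \<Otimes>\<^sub>M Y)"
    and "A \<in> sets (X \<Otimes>\<^sub>M Y) \<Longrightarrow> emeasure (mix_measure X Y t \<pi>1 \<pi>2) A
          = ennreal t * emeasure \<pi>1 A + ennreal (1 - t) * emeasure \<pi>2 A"
proof -
  show "sets (mix_measure X Y t \<pi>1 \<pi>2) = sets (X \<Otimes>\<^sub>M Y)"
    unfolding mix_measure_def by (simp add: sets.sigma_sets_eq)
  assume A: "A \<in> sets (X \<Otimes>\<^sub>M Y)"
  have s1: "sets \<pi>1 = sets (X \<Otimes>\<^sub>M Y)" and s2: "sets \<pi>2 = sets (X \<Otimes>\<^sub>M Y)"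
    using p1 p2 by (auto simp: prob_on_def)
  have ca: "countably_additive (sets (X \<Otimes>\<^sub>M Y)) (\<lambda>A. ennreal t * emeasure \<pi>1 A + ennreal (1 - t) * emeasure \<pi>2 A)"
  proof (rule countably_additiveI)
    fix F :: "nat \<Rightarrow> _" assume F: "range F \<subseteq> sets (X \<Otimes>\<^sub>M Y)" "disjoint_family F"
    have e1: "(\<Sum>i. emeasure \<pi>1 (F i)) = emeasure \<pi>1 (\<Union>i. F i)"
      using F s1 by (intro suminf_emeasure) auto
    have e2: "(\<Sum>i. emeasure \<pi>2 (F i)) = emeasure \<pi>2 (\<Union>i. F i)"
      using F s2 by (intro suminf_emeasure) auto
    show "(\<Sum>i. ennreal t * emeasure \<pi>1 (F i) + ennreal (1 - t) * emeasure \<pi>2 (F i)) =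
        ennreal t * emeasure \<pi>1 (\<Union> (range F)) + ennreal (1 - t) * emeasure \<pi>2 (\<Union> (range F))"
      by (simp add: suminf_add[symmetric] ennreal_suminf_cmult e1 e2)
  qed
  show "emeasure (mix_measure X Y t \<pi>1 \<pi>2) A = ennreal t * emeasure \<pi>1 A + ennreal (1 - t) * emeasure \<pi>2 A"
    unfolding mix_measure_def
    by (rule emeasure_measure_of_sigma[OF sets.sigma_algebra_axioms _ ca A]) (auto simp: positive_def)
qed

lemma mix_nn_integral:
  assumes p1: "prob_on \<pi>1 X Y" and p2: "prob_on \<pi>2 X Y"
  and f: "f \<in> borel_measurable (X \<Otimes>\<^sub>M Y)"
  shows "(\<integral>\<^sup>+z. f z \<partial>mix_measure X Y t \<pi>1 \<pi>2) = ennreal t * (\<integral>\<^sup>+z. f z \<partial>\<pi>1) + ennreal (1 - t) * (\<integral>\<^sup>+z. f z \<partial>\<pi>2)"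
  using f
proof induction
  case (cong f g)
  have sp: "space (mix_measure X Y t \<pi>1 \<pi>2) = space (X \<Otimes>\<^sub>M Y)"
    using mix_emeasure(1)[OF p1 p2] by (rule sets_eq_imp_space_eq)
  have sp1: "space \<pi>1 = space (X \<Otimes>\<^sub>M Y)" "space \<pi>2 = space (X \<Otimes>\<^sub>M Y)"
    using p1 p2 sets_eq_imp_space_eq[of \<pi>1 "X \<Otimes>\<^sub>M Y"] sets_eq_imp_space_eq[of \<pi>2 "X \<Otimes>\<^sub>M Y"] unfolding prob_on_def by auto
  show ?case using cong
    by (simp add: sp sp1 cong: nn_integral_cong_simp)
next
  case (set A)
  have s: "sets (mix_measure X Y t \<pi>1 \<pi>2) = sets (X \<Otimes>\<^sub>M Y)" "sets \<pi>1 = sets (X \<Otimes>\<^sub>M Y)" "sets \<pi>2 = sets (X \<Otimes>\<^sub>M Y)"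
    using mix_emeasure(1)[OF p1 p2] p1 p2 by (auto simp: prob_on_def)
  show ?case using set s by (simp add: mix_emeasure(2)[OF p1 p2])
next
  case (mult f c)
  have s: "sets (mix_measure X Y t \<pi>1 \<pi>2) = sets (X \<Otimes>\<^sub>M Y)" "sets \<pi>1 = sets (X \<Otimes>\<^sub>M Y)" "sets \<pi>2 = sets (X \<Otimes>\<^sub>M Y)"
    using mix_emeasure(1)[OF p1 p2] p1 p2 by (auto simp: prob_on_def)
  have m: "f \<in> borel_measurable (mix_measure X Y t \<pi>1 \<pi>2)" "f \<in> borel_measurable \<pi>1" "f \<in> borel_measurable \<pi>2"
    using mult(2) s by (auto cong: measurable_cong_sets)
  show ?case using mult m
    by (simp add: nn_integral_cmult distrib_left mult.assoc mult.left_commute)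
next
  case (add f g)
  have s: "sets (mix_measure X Y t \<pi>1 \<pi>2) = sets (X \<Otimes>\<^sub>M Y)" "sets \<pi>1 = sets (X \<Otimes>\<^sub>M Y)" "sets \<pi>2 = sets (X \<Otimes>\<^sub>M Y)"
    using mix_emeasure(1)[OF p1 p2] p1 p2 by (auto simp: prob_on_def)
  have m: "f \<in> borel_measurable (mix_measure X Y t \<pi>1 \<pi>2)" "f \<in> borel_measurable \<pi>1" "f \<in> borel_measurable \<pi>2"
     "g \<in> borel_measurable (mix_measure X Y t \<pi>1 \<pi>2)" "g \<in> borel_measurable \<pi>1" "g \<in> borel_measurable \<pi>2"
    using add s by (auto cong: measurable_cong_sets)
  show ?case using add m
    by (simp add: nn_integral_add distrib_left algebra_simps)
next
  case (seq U)
  have s: "sets (mix_measure X Y t \<pi>1 \<pi>2) = sets (X \<Otimes>\<^sub>M Y)" "sets \<pi>1 = sets (X \<Otimes>\<^sub>M Y)" "sets \<pi>2 = sets (X \<Otimes>\<^sub>M Y)"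
    using mix_emeasure(1)[OF p1 p2] p1 p2 by (auto simp: prob_on_def)
  have m: "\<And>i. U i \<in> borel_measurable (mix_measure X Y t \<pi>1 \<pi>2)" "\<And>i. U i \<in> borel_measurable \<pi>1" "\<And>i. U i \<in> borel_measurable \<pi>2"
    using seq s by (auto cong: measurable_cong_sets)
  have inc: "incseq U" using seq by simp
  have sup: "\<And>M. (\<And>i. U i \<in> borel_measurable M) \<Longrightarrow> integral\<^sup>N M (\<Squnion> range U) = (SUP i. integral\<^sup>N M (U i))"
  proof -
    fix M :: "('a \<times> 'b) measure" assume "\<And>i. U i \<in> borel_measurable M"
    then have "(\<integral>\<^sup>+ x. (SUP i. U i x) \<partial>M) = (SUP i. integral\<^sup>N M (U i))"
      using inc by (intro nn_integral_monotone_convergence_SUP) auto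
    moreover have "(\<Squnion> range U) = (\<lambda>x. SUP i. U i x)" by (auto simp: image_comp)
    ultimately show "integral\<^sup>N M (\<Squnion> range U) = (SUP i. integral\<^sup>N M (U i))" by simp
  qed
  have i1: "incseq (\<lambda>i. ennreal t * integral\<^sup>N \<pi>1 (U i))" "incseq (\<lambda>i. ennreal (1-t) * integral\<^sup>N \<pi>2 (U i))"
    using inc by (auto simp: incseq_def le_fun_def intro!: mult_left_mono nn_integral_mono)
  have "integral\<^sup>N (mix_measure X Y t \<pi>1 \<pi>2) (\<Squnion> range U) = (SUP i. ennreal t * integral\<^sup>N \<pi>1 (U i) + ennreal (1-t) * integral\<^sup>N \<pi>2 (U i))"
    using sup[OF m(1)] seq by simp
  also have "\<dots> = (SUP i. ennreal t * integral\<^sup>N \<pi>1 (U i)) + (SUP i. ennreal (1-t) * integral\<^sup>N \<pi>2 (U i))"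
    by (rule ennreal_SUP_add[OF i1])
  also have "\<dots> = ennreal t * integral\<^sup>N \<pi>1 (\<Squnion> range U) + ennreal (1 - t) * integral\<^sup>N \<pi>2 (\<Squnion> range U)"
    using sup[OF m(2)] sup[OF m(3)] by (simp add: SUP_mult_left_ennreal)
  finally show ?case .
qed


definition Adm :: "'a measure \<Rightarrow> 'b measure \<Rightarrow> ('b \<Rightarrow> 'a measure) \<Rightarrow> ('a \<times> 'b) measure \<Rightarrow> ('a \<times> 'b \<Rightarrow> real) set" where
  "Adm X Y \<nu> \<pi> = {c. c \<in> borel_measurable (X \<Otimes>\<^sub>M Y) \<and> integral_well_defined \<pi> c \<and>
                   (\<forall>y\<in>space Y. (\<integral>\<^sup>+ x. ennreal (exp (c (x, y))) \<partial>(\<nu> y)) = 1)}"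

lemma H_Adm: "H_kernel X Y \<nu> \<pi> = - (SUP c \<in> Adm X Y \<nu> \<pi>. ext_integral \<pi> c)"
  unfolding H_kernel_def Adm_def by simp

lemma prob_on_space: "prob_on \<pi> X Y \<Longrightarrow> space \<pi> = space (X \<Otimes>\<^sub>M Y)"
  unfolding prob_on_def using sets_eq_imp_space_eq by blast

lemma prob_on_meas: "prob_on \<pi> X Y \<Longrightarrow> f \<in> borel_measurable (X \<Otimes>\<^sub>M Y) \<Longrightarrow> f \<in> borel_measurable \<pi>"
  unfolding prob_on_def by (simp cong: measurable_cong_sets)

lemma enn2ereal_fin: "P \<noteq> \<top> \<Longrightarrow> enn2ereal P = ereal (enn2real P)"
  by (cases P rule: ennreal_cases) auto

lemma bdd_adm:
  assumes p: "prob_on \<pi> X Y" and m: "c \<in> borel_measurable (X \<Otimes>\<^sub>M Y)"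
    and B: "\<forall>z\<in>space (X \<Otimes>\<^sub>M Y). \<bar>c z\<bar> \<le> B"
    and n: "\<forall>y\<in>space Y. (\<integral>\<^sup>+ x. ennreal (exp (c (x, y))) \<partial>(\<nu> y)) = 1"
  shows "c \<in> Adm X Y \<nu> \<pi>" and "ext_integral \<pi> c = ereal (integral\<^sup>L \<pi> c)"
proof -
  interpret prob_space \<pi> using p by (simp add: prob_on_def)
  have mp: "c \<in> borel_measurable \<pi>" using prob_on_meas[OF p m] .
  have int: "integrable \<pi> c"
    using B prob_on_space[OF p] by (intro integrable_const_bound[where B=B] mp) auto
  then have f1: "int_pos \<pi> c \<noteq> \<infinity>" and f2: "int_neg \<pi> c \<noteq> \<infinity>"
    unfolding real_integrable_def int_pos_def int_neg_def by auto
  show "c \<in> Adm X Y \<nu> \<pi>" using m n f1 mp unfolding Adm_def integral_well_defined_def by auto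
  show "ext_integral \<pi> c = ereal (integral\<^sup>L \<pi> c)"
    unfolding ext_integral_def real_lebesgue_integral_def[OF int]
    using f1 f2 unfolding int_pos_def int_neg_def
    by (simp add: enn2ereal_fin)
qed

lemma zero_adm:
  assumes k: "prob_kernel Y X \<nu>" and p: "prob_on \<pi> X Y"
  shows "0 \<le> (SUP c \<in> Adm X Y \<nu> \<pi>. ext_integral \<pi> c)"
proof -
  have n0: "\<forall>y\<in>space Y. (\<integral>\<^sup>+ x. ennreal (exp ((\<lambda>_. 0::real) (x, y))) \<partial>(\<nu> y)) = 1"
  proof
    fix y assume "y \<in> space Y"
    then have "prob_space (\<nu> y)" using k by (auto simp: prob_kernel_def)
    then show "(\<integral>\<^sup>+ x. ennreal (exp ((\<lambda>_. 0::real) (x, y))) \<partial>(\<nu> y)) = 1"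
      by (simp add: prob_space.emeasure_space_1)
  qed
  have "(\<lambda>_. 0) \<in> Adm X Y \<nu> \<pi> \<and> ext_integral \<pi> (\<lambda>_. 0) = ereal (integral\<^sup>L \<pi> (\<lambda>_. 0::real))"
    using bdd_adm[OF p _ _ n0, of 0] by auto
  then show ?thesis by (metis SUP_upper integral_zero zero_ereal_def)
qed

lemma ar_e:
  fixes A1 A2 B1 B2 :: ereal and t :: real
  assumes t: "0 < t" "t < 1" and nn: "0 \<le> A1" "0 \<le> A2" "0 \<le> B1" "0 \<le> B2"
   and wd: "(A1 \<noteq> \<infinity> \<and> A2 \<noteq> \<infinity>) \<or> (B1 \<noteq> \<infinity> \<and> B2 \<noteq> \<infinity>)"
  shows "(ereal t * A1 + ereal (1-t) * A2) - (ereal t * B1 + ereal (1-t) * B2)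
     = ereal t * (A1 - B1) + ereal (1-t) * (A2 - B2)"
proof -
  have t1: "0 < 1 - t" using t by simp
  show ?thesis
  proof (cases "A1 \<noteq> \<infinity> \<and> A2 \<noteq> \<infinity>")
    case True
    then obtain a1 a2 where a: "A1 = ereal a1" "A2 = ereal a2" using nn
      by (cases A1; cases A2) auto
    show ?thesis
    proof (cases "B1 = \<infinity> \<or> B2 = \<infinity>")
      case True then show ?thesis using t t1 a nn by (cases B1; cases B2) auto
    next
      case False
      then obtain b1 b2 where "B1 = ereal b1" "B2 = ereal b2" using nn
        by (cases B1; cases B2) auto
      then show ?thesis using a by (simp add: algebra_simps)
    qed
  next
    case False
    then have fb: "B1 \<noteq> \<infinity> \<and> B2 \<noteq> \<infinity>" using wd by auto
    then obtain b1 b2 where b: "B1 = ereal b1" "B2 = ereal b2" using nn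
      by (cases B1; cases B2) auto
    from False have "A1 = \<infinity> \<or> A2 = \<infinity>" by auto
    then show ?thesis
    proof
      assume "A1 = \<infinity>"
      then show ?thesis using t t1 b nn by (cases A2) auto
    next
      assume "A2 = \<infinity>"
      then show ?thesis using t t1 b nn by (cases A1) auto
    qed
  qed
qed

lemma arith2:
  fixes S1 S2 :: ereal and t :: real
  assumes "0 \<le> S1" "0 \<le> S2" "0 \<le> t" "t \<le> 1"
  shows "ereal t * (- S1) + ereal (1-t) * (- S2) = - (ereal t * S1 + ereal (1-t) * S2)"
  using assms by (cases S1; cases S2) (auto simp: algebra_simps)

lemma enn2ereal_comb: "0 \<le> t \<Longrightarrow> t \<le> 1 \<Longrightarrow>
  enn2ereal (ennreal t * a + ennreal (1-t) * b) = ereal t * enn2ereal a + ereal (1-t) * enn2ereal b"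
  by (simp add: plus_ennreal.rep_eq times_ennreal.rep_eq)


lemma mix_eq_left:
  assumes p1: "prob_on \<pi>1 X Y" and p2: "prob_on \<pi>2 X Y"
  shows "mix_measure X Y 0 \<pi>1 \<pi>2 = \<pi>2" and "mix_measure X Y 1 \<pi>1 \<pi>2 = \<pi>1"
proof -
  have s: "sets \<pi>1 = sets (X \<Otimes>\<^sub>M Y)" "sets \<pi>2 = sets (X \<Otimes>\<^sub>M Y)" using p1 p2 by (auto simp: prob_on_def)
  show "mix_measure X Y 0 \<pi>1 \<pi>2 = \<pi>2"
    by (rule measure_eqI) (auto simp: mix_emeasure[OF p1 p2] s)
  show "mix_measure X Y 1 \<pi>1 \<pi>2 = \<pi>1"
    by (rule measure_eqI) (auto simp: mix_emeasure[OF p1 p2] s)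
qed

lemma concave:
  assumes k: "prob_kernel Y X \<nu>" and p1: "prob_on \<pi>1 X Y" and p2: "prob_on \<pi>2 X Y"
    and t: "0 \<le> t" "t \<le> 1"
  shows "ereal t * H_kernel X Y \<nu> \<pi>1 + ereal (1 - t) * H_kernel X Y \<nu> \<pi>2
              \<le> H_kernel X Y \<nu> (mix_measure X Y t \<pi>1 \<pi>2)"
proof -
  consider "t = 0" | "t = 1" | "0 < t \<and> t < 1" using t by linarith
  then show ?thesis
  proof cases
    case 1 then show ?thesis using mix_eq_left[OF p1 p2] by (simp add: zero_ereal_def[symmetric])
  next
    case 2 then show ?thesis using mix_eq_left[OF p1 p2] by (simp add: zero_ereal_def[symmetric])
  next
    case 3
    then have t0: "0 < t" "t < 1" by auto
    define \<mu> where "\<mu> = mix_measure X Y t \<pi>1 \<pi>2"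
    define S where "S = (\<lambda>\<pi>. SUP c \<in> Adm X Y \<nu> \<pi>. ext_integral \<pi> c)"
    have S_app: "\<And>\<pi>. S \<pi> = (SUP c \<in> Adm X Y \<nu> \<pi>. ext_integral \<pi> c)" by (simp add: S_def)
    have S1: "0 \<le> S \<pi>1" and S2: "0 \<le> S \<pi>2" using zero_adm[OF k p1] zero_adm[OF k p2] by (auto simp: S_def)
    have sm: "sets \<mu> = sets (X \<Otimes>\<^sub>M Y)" unfolding \<mu>_def by (rule mix_emeasure(1)[OF p1 p2])
    have le: "S \<mu> \<le> ereal t * S \<pi>1 + ereal (1-t) * S \<pi>2"
    proof (subst S_app, rule SUP_least)
      fix c assume c: "c \<in> Adm X Y \<nu> \<mu>"
      have cm: "c \<in> borel_measurable (X \<Otimes>\<^sub>M Y)" using c by (auto simp: Adm_def)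
      have em: "(\<lambda>z. ennreal (c z)) \<in> borel_measurable (X \<Otimes>\<^sub>M Y)" "(\<lambda>z. ennreal (- c z)) \<in> borel_measurable (X \<Otimes>\<^sub>M Y)"
        using cm by auto
      have P: "int_pos \<mu> c = ennreal t * int_pos \<pi>1 c + ennreal (1-t) * int_pos \<pi>2 c"
        unfolding int_pos_def \<mu>_def by (rule mix_nn_integral[OF p1 p2 em(1)])
      have N: "int_neg \<mu> c = ennreal t * int_neg \<pi>1 c + ennreal (1-t) * int_neg \<pi>2 c"
        unfolding int_neg_def \<mu>_def by (rule mix_nn_integral[OF p1 p2 em(2)])
      have tt: "ennreal t \<noteq> 0" "ennreal (1-t) \<noteq> 0" using t0 by auto
      have wd: "(int_pos \<pi>1 c \<noteq> \<top> \<and> int_pos \<pi>2 c \<noteq> \<top>) \<or> (int_neg \<pi>1 c \<noteq> \<top> \<and> int_neg \<pi>2 c \<noteq> \<top>)"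
        using c P N tt unfolding Adm_def integral_well_defined_def
        by (auto simp: ennreal_mult_eq_top_iff)
      have cA: "c \<in> Adm X Y \<nu> \<pi>1" "c \<in> Adm X Y \<nu> \<pi>2"
        using c wd prob_on_meas[OF p1 cm] prob_on_meas[OF p2 cm]
        unfolding Adm_def integral_well_defined_def by auto
      have "ext_integral \<mu> c = ereal t * ext_integral \<pi>1 c + ereal (1-t) * ext_integral \<pi>2 c"
        unfolding ext_integral_def P N enn2ereal_comb[OF t]
        using ar_e[OF t0] wd by (auto simp: enn2ereal_nonneg)
      also have "\<dots> \<le> ereal t * S \<pi>1 + ereal (1-t) * S \<pi>2"
        unfolding S_def using t cA
        by (intro add_mono ereal_mult_left_mono SUP_upper) auto
      finally show "ext_integral \<mu> c \<le> ereal t * S \<pi>1 + ereal (1-t) * S \<pi>2" .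
    qed
    have "ereal t * H_kernel X Y \<nu> \<pi>1 + ereal (1 - t) * H_kernel X Y \<nu> \<pi>2 = - (ereal t * S \<pi>1 + ereal (1-t) * S \<pi>2)"
      unfolding H_Adm S_app[symmetric] using arith2[OF S1 S2 t] by simp
    also have "\<dots> \<le> - S \<mu>" using le by simp
    also have "\<dots> = H_kernel X Y \<nu> (mix_measure X Y t \<pi>1 \<pi>2)" unfolding H_Adm S_app \<mu>_def ..
    finally show ?thesis .
  qed
qed

lemma trunc_int:
  assumes p: "prob_space \<pi>" and cm: "c \<in> borel_measurable \<pi>" and Nfin: "int_neg \<pi> c = ennreal n0"
  shows "integrable \<pi> (\<lambda>z. min (c z) (real L))"
    and "integral\<^sup>L \<pi> (\<lambda>z. min (c z) (real L)) = enn2real (\<integral>\<^sup>+z. ennreal (min (c z) (real L)) \<partial>\<pi>) - enn2real (ennreal n0)"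
proof -
  interpret prob_space \<pi> by fact
  have neg: "(\<integral>\<^sup>+z. ennreal (- min (c z) (real L)) \<partial>\<pi>) = ennreal n0"
  proof -
    have "(\<integral>\<^sup>+z. ennreal (- min (c z) (real L)) \<partial>\<pi>) = (\<integral>\<^sup>+z. ennreal (- c z) \<partial>\<pi>)"
      by (rule nn_integral_cong) (auto simp: min_def ennreal_neg)
    then show ?thesis using Nfin by (simp add: int_neg_def)
  qed
  have "(\<integral>\<^sup>+z. ennreal (min (c z) (real L)) \<partial>\<pi>) \<le> (\<integral>\<^sup>+z. ennreal (real L) \<partial>\<pi>)"
    by (intro nn_integral_mono) auto
  also have "\<dots> = ennreal (real L)" by (simp add: emeasure_space_1)
  finally have pos: "(\<integral>\<^sup>+z. ennreal (min (c z) (real L)) \<partial>\<pi>) \<noteq> \<top>"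
    by (rule neq_top_trans[OF ennreal_neq_top])
  show int: "integrable \<pi> (\<lambda>z. min (c z) (real L))"
    unfolding real_integrable_def using pos neg cm by auto
  show "integral\<^sup>L \<pi> (\<lambda>z. min (c z) (real L)) = enn2real (\<integral>\<^sup>+z. ennreal (min (c z) (real L)) \<partial>\<pi>) - enn2real (ennreal n0)"
    unfolding real_lebesgue_integral_def[OF int] neg ..
qed

lemma trunc_L:
  assumes p: "prob_space \<pi>" and cm: "c \<in> borel_measurable \<pi>" and Nfin: "int_neg \<pi> c = ennreal n0"
    and n0: "0 \<le> n0" and q: "ereal (q + n0) < enn2ereal (int_pos \<pi> c)"
  shows "\<exists>L::nat. q < integral\<^sup>L \<pi> (\<lambda>z. min (c z) (real L))"
proof (cases "q + n0 < 0")
  case True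
  have "q < integral\<^sup>L \<pi> (\<lambda>z. min (c z) (real 0))"
    unfolding trunc_int(2)[OF p cm Nfin] using n0 apply simp
    using True n0 enn2real_nonneg[of "\<integral>\<^sup>+ z. ennreal (min (c z) 0) \<partial>\<pi>"] by linarith
  then show ?thesis by blast
next
  case False
  define I where "I = (\<lambda>L::nat. \<integral>\<^sup>+z. ennreal (min (c z) (real L)) \<partial>\<pi>)"
  have lim: "I \<longlonglongrightarrow> int_pos \<pi> c"
    unfolding I_def int_pos_def
  proof (rule nn_integral_LIMSEQ)
    show "incseq (\<lambda>L z. ennreal (min (c z) (real L)))"
      by (auto simp: incseq_def le_fun_def intro!: ennreal_leI)
    show "(\<lambda>z. ennreal (min (c z) (real L))) \<in> borel_measurable \<pi>" for L using cm by measurable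
    fix z
    show "(\<lambda>L. ennreal (min (c z) (real L))) \<longlonglongrightarrow> ennreal (c z)"
    proof (rule tendsto_eventually)
      show "\<forall>\<^sub>F L in sequentially. ennreal (min (c z) (real L)) = ennreal (c z)"
        unfolding eventually_sequentially
        by (rule exI[of _ "nat \<lceil>c z\<rceil>"]) (auto simp: min_def intro!: arg_cong[where f=ennreal] dest!: le_nat_iff[THEN iffD1] ceiling_le_iff[THEN iffD1] )
    qed
  qed
  have "ennreal (q + n0) < int_pos \<pi> c"
    using q False by (simp add: less_ennreal.rep_eq)
  then have "eventually (\<lambda>L. ennreal (q + n0) < I L) sequentially"
    by (rule order_tendstoD(1)[OF lim])
  then obtain L where L: "ennreal (q + n0) < I L" by (auto simp: eventually_sequentially)
  have fin: "I L \<noteq> \<top>" using trunc_int(1)[OF p cm Nfin, of L] unfolding I_def real_integrable_def by auto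
  have "q + n0 < enn2real (I L)"
    using L fin False by (metis ennreal_enn2real_if ennreal_less_iff enn2real_nonneg not_le)
  then have "q < integral\<^sup>L \<pi> (\<lambda>z. min (c z) (real L))"
    unfolding trunc_int(2)[OF p cm Nfin] using n0 by (simp add: I_def)
  then show ?thesis by blast
qed

lemma kernel_meas: "prob_kernel Y X \<nu> \<Longrightarrow> \<nu> \<in> measurable Y (subprob_algebra X)"
  unfolding prob_kernel_def
  by (intro measurable_subprob_algebra) (auto intro: prob_space_imp_subprob_space)



lemma exp_max_le: "exp (max u v) \<le> exp u + exp (v::real)"
  by (smt (verit) exp_gt_zero max_def)

lemma exp_trunc: "0 < a \<Longrightarrow> exp (max (min (x::real) L) (ln a)) \<le> exp x + a"
  using exp_max_le[of "min x L" "ln a"] by (smt (verit) exp_ln exp_le_cancel_iff min.cobounded1)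

lemma exp_trunc_low: "0 < a \<Longrightarrow> a \<le> exp (max (min (x::real) L) (ln a))"
  by (metis exp_ln exp_le_cancel_iff max.cobounded2)

lemma approx:
  assumes k: "prob_kernel Y X \<nu>" and p: "prob_on \<pi> X Y" and c: "c \<in> Adm X Y \<nu> \<pi>"
    and r: "ereal r < ext_integral \<pi> c"
  shows "\<exists>c'. c' \<in> borel_measurable (X \<Otimes>\<^sub>M Y) \<and> (\<exists>B. \<forall>z\<in>space (X \<Otimes>\<^sub>M Y). \<bar>c' z\<bar> \<le> B)
     \<and> (\<forall>y\<in>space Y. (\<integral>\<^sup>+ x. ennreal (exp (c' (x, y))) \<partial>(\<nu> y)) = 1) \<and> r < integral\<^sup>L \<pi> c'"
proof -
  interpret prob_space \<pi> using p by (simp add: prob_on_def)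
  have cm[measurable]: "c \<in> borel_measurable (X \<Otimes>\<^sub>M Y)" using c by (simp add: Adm_def)
  have cmp: "c \<in> borel_measurable \<pi>" by (rule prob_on_meas[OF p cm])
  have cn: "\<And>y. y \<in> space Y \<Longrightarrow> (\<integral>\<^sup>+ x. ennreal (exp (c (x, y))) \<partial>(\<nu> y)) = 1"
    using c by (simp add: Adm_def)
  have wd: "int_pos \<pi> c \<noteq> \<infinity> \<or> int_neg \<pi> c \<noteq> \<infinity>" using c by (simp add: Adm_def integral_well_defined_def)
  have Nfin: "int_neg \<pi> c \<noteq> \<top>"
  proof
    assume "int_neg \<pi> c = \<top>"
    then have "int_pos \<pi> c \<noteq> \<top>" using wd by auto
    then have "ext_integral \<pi> c = - \<infinity>" using \<open>int_neg \<pi> c = \<top>\<close>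
      unfolding ext_integral_def by (simp add: enn2ereal_fin)
    then show False using r by simp
  qed
  define n0 where "n0 = enn2real (int_neg \<pi> c)"
  have n0: "0 \<le> n0" "int_neg \<pi> c = ennreal n0" using Nfin by (auto simp: n0_def ennreal_enn2real_if)
  obtain \<rho> where \<rho>: "ereal r < ereal \<rho>" "ereal \<rho> < ext_integral \<pi> c" using ereal_dense2[OF r] by blast
  define a where "a = (\<rho> - r) / 2"
  have a: "0 < a" using \<rho> by (simp add: a_def)
  have "ereal (r + a + n0) < enn2ereal (int_pos \<pi> c)"
  proof -
    have "r + a \<le> \<rho>" using \<rho> by (simp add: a_def field_simps)
    then have "ereal (r + a) < ext_integral \<pi> c" by (intro le_less_trans[OF _ \<rho>(2)]) simp
    then show ?thesis unfolding ext_integral_def n0(2) using n0(1)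
      by (cases "enn2ereal (int_pos \<pi> c)") auto
  qed
  then obtain L :: nat where L: "r + a < integral\<^sup>L \<pi> (\<lambda>z. min (c z) (real L))"
    using trunc_L[OF prob_space_axioms cmp n0(2) n0(1)] by blast
  define g where "g = (\<lambda>z. max (min (c z) (real L)) (ln a))"
  have gm[measurable]: "g \<in> borel_measurable (X \<Otimes>\<^sub>M Y)" unfolding g_def by measurable
  define I where "I = (\<lambda>y. \<integral>\<^sup>+x. ennreal (exp (g (x,y))) \<partial>\<nu> y)"
  have Im[measurable]: "I \<in> borel_measurable Y"
    unfolding I_def
    by (rule nn_integral_measurable_subprob_algebra2[where f="\<lambda>y x. ennreal (exp (g (x,y)))", OF _ kernel_meas[OF k]]) measurable
  define Z where "Z = (\<lambda>y. enn2real (I y))"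
  have Zm[measurable]: "Z \<in> borel_measurable Y" unfolding Z_def by measurable
  have IZ: "I y = ennreal (Z y) \<and> a \<le> Z y \<and> Z y \<le> 1 + a" if y: "y \<in> space Y" for y
  proof -
    have py: "prob_space (\<nu> y)" and sy: "sets (\<nu> y) = sets X" using k y by (auto simp: prob_kernel_def)
    have gX: "(\<lambda>x. g (x,y)) \<in> borel_measurable X" using measurable_compose[OF measurable_Pair2'[OF y] gm] by simp
    have cX: "(\<lambda>x. c (x,y)) \<in> borel_measurable X" using measurable_compose[OF measurable_Pair2'[OF y] cm] by simp
    have gx[measurable]: "(\<lambda>x. g (x,y)) \<in> borel_measurable (\<nu> y)" using gX by (simp cong: measurable_cong_sets[OF sy refl])
    have cx[measurable]: "(\<lambda>x. c (x,y)) \<in> borel_measurable (\<nu> y)" using cX by (simp cong: measurable_cong_sets[OF sy refl])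
    have "I y \<le> (\<integral>\<^sup>+x. ennreal (exp (c (x,y))) + ennreal a \<partial>\<nu> y)"
      unfolding I_def g_def
    proof (intro nn_integral_mono)
      fix x
      have "ennreal (exp (max (min (c (x, y)) (real L)) (ln a))) \<le> ennreal (exp (c (x,y)) + a)"
        by (rule ennreal_leI, rule exp_trunc[OF a])
      also have "\<dots> = ennreal (exp (c (x,y))) + ennreal a" using a by (intro ennreal_plus) auto
      finally show "ennreal (exp (max (min (c (x, y)) (real L)) (ln a))) \<le> ennreal (exp (c (x,y))) + ennreal a" .
    qed
    also have "\<dots> = 1 + ennreal a"
      by (simp add: nn_integral_add cn[OF y] prob_space.emeasure_space_1[OF py])
    finally have up: "I y \<le> ennreal (1 + a)" using a by (simp add: ennreal_plus)
    have "ennreal a = (\<integral>\<^sup>+x. ennreal a \<partial>\<nu> y)" by (simp add: prob_space.emeasure_space_1[OF py])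
    also have "\<dots> \<le> I y"
      unfolding I_def g_def
      by (intro nn_integral_mono ennreal_leI exp_trunc_low[OF a])
    finally have lo: "ennreal a \<le> I y" .
    have fin: "I y \<noteq> \<top>" using up by (metis ennreal_neq_top neq_top_trans)
    then have e: "I y = ennreal (Z y)" by (simp add: Z_def ennreal_enn2real_if)
    have z0: "0 \<le> Z y" by (simp add: Z_def)
    have "a \<le> Z y" using lo unfolding e using z0 by (simp add: ennreal_le_iff)
    moreover have "Z y \<le> 1 + a" using up unfolding e using a by (subst (asm) ennreal_le_iff) auto
    ultimately show ?thesis using e by blast
  qed
  define c' where "c' = (\<lambda>z. g z - ln (Z (snd z)))"
  have c'm[measurable]: "c' \<in> borel_measurable (X \<Otimes>\<^sub>M Y)" unfolding c'_def by measurable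
  have gb: "ln a \<le> g z" "g z \<le> max (real L) (ln a)" "min (c z) (real L) \<le> g z" for z
    unfolding g_def by auto
  have lnZ: "ln a \<le> ln (Z y) \<and> ln (Z y) \<le> ln (1 + a)" if "y \<in> space Y" for y
    using IZ[OF that] a by auto
  define B where "B = \<bar>ln a - ln (1 + a)\<bar> + \<bar>max (real L) (ln a) - ln a\<bar>"
  have cb: "\<bar>c' z\<bar> \<le> B" if "z \<in> space (X \<Otimes>\<^sub>M Y)" for z
  proof -
    have "z \<in> space X \<times> space Y" using that unfolding space_pair_measure .
    then have "snd z \<in> space Y" by (simp add: mem_Times_iff)
    from lnZ[OF this] gb[of z] show ?thesis unfolding c'_def B_def by linarith
  qed
  have cn': "(\<integral>\<^sup>+ x. ennreal (exp (c' (x, y))) \<partial>(\<nu> y)) = 1" if y: "y \<in> space Y" for y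
  proof -
    have Zp: "0 < Z y" using IZ[OF y] a by auto
    have "(\<integral>\<^sup>+ x. ennreal (exp (c' (x, y))) \<partial>(\<nu> y)) = (\<integral>\<^sup>+ x. ennreal (exp (g (x, y))) * ennreal (1 / Z y) \<partial>(\<nu> y))"
    proof (rule nn_integral_cong)
      fix x
      have "exp (c' (x, y)) = exp (g (x, y)) * (1 / Z y)"
        unfolding c'_def using Zp by (simp add: exp_diff)
      moreover have "ennreal (exp (g (x, y)) * (1 / Z y)) = ennreal (exp (g (x, y))) * ennreal (1 / Z y)"
        using Zp by (intro ennreal_mult) auto
      ultimately show "ennreal (exp (c' (x, y))) = ennreal (exp (g (x, y))) * ennreal (1 / Z y)"
        by simp
    qed
    also have "\<dots> = I y * ennreal (1 / Z y)"
    proof -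
      have sy: "sets (\<nu> y) = sets X" using k y by (auto simp: prob_kernel_def)
      have gX: "(\<lambda>x. g (x,y)) \<in> borel_measurable X" using measurable_compose[OF measurable_Pair2'[OF y] gm] by simp
      have gx: "(\<lambda>x. ennreal (exp (g (x,y)))) \<in> borel_measurable (\<nu> y)"
        using gX by (simp cong: measurable_cong_sets[OF sy refl])
      show ?thesis unfolding I_def by (rule nn_integral_multc[OF gx])
    qed
    also have "\<dots> = ennreal (Z y * (1 / Z y))" using IZ[OF y] Zp by (simp add: ennreal_mult[symmetric])
    also have "\<dots> = 1" using Zp by simp
    finally show ?thesis .
  qed
  have sp: "space \<pi> = space (X \<Otimes>\<^sub>M Y)" by (rule prob_on_space[OF p])
  have c'mp: "c' \<in> borel_measurable \<pi>" by (rule prob_on_meas[OF p c'm])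
  have intc': "integrable \<pi> c'"
    using cb sp by (intro integrable_const_bound[where B=B] c'mp) auto
  have intm: "integrable \<pi> (\<lambda>z. min (c z) (real L) - a)"
    using trunc_int(1)[OF prob_space_axioms cmp n0(2)] by auto
  have "r < integral\<^sup>L \<pi> (\<lambda>z. min (c z) (real L)) - a" using L by simp
  also have "integral\<^sup>L \<pi> (\<lambda>z. min (c z) (real L)) - a = integral\<^sup>L \<pi> (\<lambda>z. min (c z) (real L) - a)"
  proof -
    have "integral\<^sup>L \<pi> (\<lambda>z. min (c z) (real L) - a) = integral\<^sup>L \<pi> (\<lambda>z. min (c z) (real L)) - integral\<^sup>L \<pi> (\<lambda>z. a)"
      using trunc_int(1)[OF prob_space_axioms cmp n0(2)] by (intro Bochner_Integration.integral_diff) auto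
    then show ?thesis by (simp add: prob_space)
  qed
  also have "\<dots> \<le> integral\<^sup>L \<pi> c'"
  proof (rule Bochner_Integration.integral_mono[OF intm intc'])
    fix z assume z: "z \<in> space \<pi>"
    have "z \<in> space X \<times> space Y" using z unfolding sp space_pair_measure .
    then have "snd z \<in> space Y" by (simp add: mem_Times_iff)
    have l1: "ln (1 + a) \<le> a" using a by (intro ln_add_one_self_le_self) simp
    from lnZ[OF \<open>snd z \<in> space Y\<close>] l1 have "ln (Z (snd z)) \<le> a" by linarith
    then show "min (c z) (real L) - a \<le> c' z" using gb[of z] unfolding c'_def by linarith
  qed
  finally have "r < integral\<^sup>L \<pi> c'" .
  moreover have "\<exists>B. \<forall>z\<in>space (X \<Otimes>\<^sub>M Y). \<bar>c' z\<bar> \<le> B" using cb by blast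
  ultimately show ?thesis using c'm cn' by (intro exI[of _ c']) auto
qed


lemma usc:
  assumes k: "prob_kernel Y X \<nu>" and ps: "\<forall>n. prob_on (\<pi>s n) X Y" and p: "prob_on \<pi> X Y"
    and conv: "\<forall>f :: 'a \<times> 'b \<Rightarrow> real. f \<in> borel_measurable (X \<Otimes>\<^sub>M Y) \<longrightarrow> bounded (f ` space (X \<Otimes>\<^sub>M Y)) \<longrightarrow>
                 (\<lambda>n. \<integral>z. f z \<partial>(\<pi>s n)) \<longlonglongrightarrow> (\<integral>z. f z \<partial>\<pi>)"
  shows "limsup (\<lambda>n. H_kernel X Y \<nu> (\<pi>s n)) \<le> H_kernel X Y \<nu> \<pi>"
proof -
  define S where "S = (\<lambda>\<pi>. SUP c \<in> Adm X Y \<nu> \<pi>. ext_integral \<pi> c)"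
  have S_app: "\<And>\<pi>. S \<pi> = (SUP c \<in> Adm X Y \<nu> \<pi>. ext_integral \<pi> c)" by (simp add: S_def)
  have key: "S \<pi> \<le> liminf (\<lambda>n. S (\<pi>s n))"
  proof (subst S_app, rule SUP_least)
    fix c assume c: "c \<in> Adm X Y \<nu> \<pi>"
    show "ext_integral \<pi> c \<le> liminf (\<lambda>n. S (\<pi>s n))"
    proof (rule dense_le)
      fix x assume x: "x < ext_integral \<pi> c"
      show "x \<le> liminf (\<lambda>n. S (\<pi>s n))"
      proof (cases x)
        case MInf then show ?thesis by simp
      next
        case PInf then show ?thesis using x by simp
      next
        case (real r)
        then have "ereal r < ext_integral \<pi> c" using x by simp
        from approx[OF k p c this] obtain c' B where
          c'm: "c' \<in> borel_measurable (X \<Otimes>\<^sub>M Y)" and cb: "\<forall>z\<in>space (X \<Otimes>\<^sub>M Y). \<bar>c' z\<bar> \<le> B"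
          and cn: "\<forall>y\<in>space Y. (\<integral>\<^sup>+ x. ennreal (exp (c' (x, y))) \<partial>(\<nu> y)) = 1"
          and rl: "r < integral\<^sup>L \<pi> c'" by blast
        have bd: "bounded (c' ` space (X \<Otimes>\<^sub>M Y))" using cb by (auto simp: bounded_real)
        have lim: "(\<lambda>n. \<integral>z. c' z \<partial>(\<pi>s n)) \<longlonglongrightarrow> (\<integral>z. c' z \<partial>\<pi>)" using conv c'm bd by blast
        have le: "ereal (\<integral>z. c' z \<partial>(\<pi>s n)) \<le> S (\<pi>s n)" for n
        proof -
          have A: "c' \<in> Adm X Y \<nu> (\<pi>s n)" and e: "ext_integral (\<pi>s n) c' = ereal (integral\<^sup>L (\<pi>s n) c')"
            using bdd_adm[OF ps[rule_format, of n] c'm cb cn] by auto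
          show ?thesis unfolding S_app e[symmetric] by (rule SUP_upper[OF A])
        qed
        have "ereal r < ereal (\<integral>z. c' z \<partial>\<pi>)" using rl by simp
        also have "\<dots> = liminf (\<lambda>n. ereal (\<integral>z. c' z \<partial>(\<pi>s n)))"
          by (rule lim_imp_Liminf[symmetric]) (use lim in auto)
        also have "\<dots> \<le> liminf (\<lambda>n. S (\<pi>s n))"
          by (rule Liminf_mono) (use le in auto)
        finally show ?thesis using real by simp
      qed
    qed
  qed
  have "limsup (\<lambda>n. H_kernel X Y \<nu> (\<pi>s n)) = limsup (\<lambda>n. - S (\<pi>s n))"
    unfolding H_Adm S_app ..
  also have "\<dots> = - liminf (\<lambda>n. S (\<pi>s n))" by (rule ereal_Limsup_uminus)
  also have "\<dots> \<le> - S \<pi>" using key by simp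
  also have "\<dots> = H_kernel X Y \<nu> \<pi>" unfolding H_Adm S_app ..
  finally show ?thesis .
qed

theorem mainTheorem4:
  fixes X :: "'a measure" and Y :: "'b measure" and \<nu> :: "'b \<Rightarrow> 'a measure"
  assumes kernel: "prob_kernel Y X \<nu>"
  shows "(\<forall>\<pi>1 \<pi>2 t. prob_on \<pi>1 X Y \<longrightarrow> prob_on \<pi>2 X Y \<longrightarrow> 0 \<le> t \<longrightarrow> t \<le> 1 \<longrightarrow>
            ereal t * H_kernel X Y \<nu> \<pi>1 + ereal (1 - t) * H_kernel X Y \<nu> \<pi>2
              \<le> H_kernel X Y \<nu> (mix_measure X Y t \<pi>1 \<pi>2))
       \<and> (\<forall>(\<pi>s :: nat \<Rightarrow> ('a \<times> 'b) measure) \<pi>.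
            (\<forall>n. prob_on (\<pi>s n) X Y) \<longrightarrow> prob_on \<pi> X Y \<longrightarrow>
            (\<forall>f :: 'a \<times> 'b \<Rightarrow> real. f \<in> borel_measurable (X \<Otimes>\<^sub>M Y) \<longrightarrow> bounded (f ` space (X \<Otimes>\<^sub>M Y)) \<longrightarrow>
                 (\<lambda>n. \<integral>z. f z \<partial>(\<pi>s n)) \<longlonglongrightarrow> (\<integral>z. f z \<partial>\<pi>)) \<longrightarrow>
            limsup (\<lambda>n. H_kernel X Y \<nu> (\<pi>s n)) \<le> H_kernel X Y \<nu> \<pi>)"
  using concave[OF kernel] usc[OF kernel] by blast

end
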